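(* There is an absolute constant $C>0$ such that the following holds. Let $\varepsilon\in(0,1/2]$ and let $A$ be an $n\times n$ random matrix with i.i.d. entries satisfying $\mathbb{E}A_{ij}^2\le1$ and such that almost surely each entry satisfies either $A_{ij}=0$ or $\sqrt n/2\le|A_{ij}|\le 5\sqrt n/\sqrt{\varepsilon}$. Then with probability at least $1-2\exp(-\varepsilon n/4)$ there exist $I,J\subset[n]$ with $|I|,|J|\le\varepsilon n$ such that the matrix $\tilde A$ obtained from $A$ by replacing all entries with indices in $I\times J$ by zero satisfies $$\|\tilde A\|\le\frac{C\ln(\varepsilon^{-1})}{\sqrt\varepsilon}\sqrt n.$$
   Context: $\|\cdot\|$ denotes the operator norm (Euclidean norm to Euclidean norm). *)

theory Defs
  imports "HOL-Probability.Probability"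
begin

definition vec_norm2 :: "nat \<Rightarrow> (nat \<Rightarrow> real) \<Rightarrow> real" where
  "vec_norm2 n x = sqrt (\<Sum>j<n. (x j)^2)"

definition op_norm :: "nat \<Rightarrow> (nat \<Rightarrow> nat \<Rightarrow> real) \<Rightarrow> real" where
  "op_norm n B = Sup {vec_norm2 n (\<lambda>i. \<Sum>j<n. B i j * x j) | x. vec_norm2 n x \<le> 1}"

text \<open>The random n x n matrix with i.i.d. entries of law mu, realized canonically
  on the product space: the outcome w is the matrix itself, entry (i,j) is w (i,j).\<close>
definition iid_matrix_space :: "nat \<Rightarrow> real measure \<Rightarrow> (nat \<times> nat \<Rightarrow> real) measure" where
  "iid_matrix_space n \<mu> = PiM ({..<n} \<times> {..<n}) (\<lambda>_. \<mu>)"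

definition zero_block :: "nat set \<Rightarrow> nat set \<Rightarrow> (nat \<times> nat \<Rightarrow> real) \<Rightarrow> nat \<Rightarrow> nat \<Rightarrow> real" where
  "zero_block I J w i j = (if i \<in> I \<and> j \<in> J then 0 else w (i, j))"

end

theory Submission
  imports Defs
begin


lemma row_cs:
  fixes c :: "nat \<Rightarrow> real"
  assumes "card {j\<in>{..<n}. c j \<noteq> 0} \<le> D"
  shows "(\<Sum>j<n. c j)^2 \<le> D * (\<Sum>j<n. (c j)^2)"
proof -
  let ?S = "{j\<in>{..<n}. c j \<noteq> 0}"
  have "(\<Sum>j<n. c j) = (\<Sum>j\<in>?S. c j)"
    by (rule sum.mono_neutral_right) auto
  also have "\<dots> = (\<Sum>j\<in>?S. 1 * c j)" by simp
  finally have "(\<Sum>j<n. c j)^2 = (\<Sum>j\<in>?S. 1 * c j)^2" by simp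
  also have "\<dots> \<le> (\<Sum>j\<in>?S. 1^2) * (\<Sum>j\<in>?S. (c j)^2)"
    by (rule Cauchy_Schwarz_ineq_sum)
  also have "(\<Sum>j\<in>?S. (c j)^2) = (\<Sum>j<n. (c j)^2)"
    by (rule sum.mono_neutral_left) auto
  also have "(\<Sum>j\<in>?S. (1::real)^2) = real (card ?S)" by simp
  also have "real (card ?S) * (\<Sum>j<n. (c j)^2) \<le> D * (\<Sum>j<n. (c j)^2)"
    using assms by (intro mult_right_mono) (auto intro: sum_nonneg)
  finally show ?thesis .
qed

lemma sv1:
  fixes B :: "nat \<Rightarrow> nat \<Rightarrow> real" and D :: nat
  assumes rows: "\<And>i. i<n \<Longrightarrow> card {j\<in>{..<n}. B i j \<noteq> 0} \<le> D"
  shows "(\<Sum>i<n. (\<Sum>j<n. B i j * x j)^2) \<le> (\<Sum>i<n. D * (\<Sum>j<n. (B i j * x j)^2))"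
proof (rule sum_mono)
  fix i assume i: "i \<in> {..<n}"
  have "{j\<in>{..<n}. B i j * x j \<noteq> 0} \<subseteq> {j\<in>{..<n}. B i j \<noteq> 0}" by auto
  then have "card {j\<in>{..<n}. B i j * x j \<noteq> 0} \<le> card {j\<in>{..<n}. B i j \<noteq> 0}"
    by (intro card_mono) auto
  also have "\<dots> \<le> D" using rows i by simp
  finally show "(\<Sum>j<n. B i j * x j)^2 \<le> D * (\<Sum>j<n. (B i j * x j)^2)"
    by (rule row_cs)
qed

lemma sv2:
  fixes B :: "nat \<Rightarrow> nat \<Rightarrow> real" and D :: nat
  shows "(\<Sum>i<n. D * (\<Sum>j<n. (B i j * x j)^2)) = D * (\<Sum>j<n. (x j)^2 * (\<Sum>i<n. (B i j)^2))"
proof -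
  have "(\<Sum>i<n. D * (\<Sum>j<n. (B i j * x j)^2)) = D * (\<Sum>i<n. \<Sum>j<n. (B i j * x j)^2)"
    by (simp add: sum_distrib_left)
  also have "(\<Sum>i<n. \<Sum>j<n. (B i j * x j)^2) = (\<Sum>j<n. \<Sum>i<n. (B i j * x j)^2)"
    by (rule sum.swap)
  also have "\<dots> = (\<Sum>j<n. (x j)^2 * (\<Sum>i<n. (B i j)^2))"
    by (intro sum.cong refl) (simp add: sum_distrib_left power_mult_distrib mult.commute)
  finally show ?thesis .
qed

lemma sv3:
  fixes B :: "nat \<Rightarrow> nat \<Rightarrow> real" and D :: nat and a :: real
  assumes cols: "card {i\<in>{..<n}. B i j \<noteq> 0} \<le> D"
  and ent: "\<And>i. i<n \<Longrightarrow> \<bar>B i j\<bar> \<le> a"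
  shows "(\<Sum>i<n. (B i j)^2) \<le> D * a^2"
proof -
  have "(\<Sum>i<n. (B i j)^2) = (\<Sum>i\<in>{i\<in>{..<n}. B i j \<noteq> 0}. (B i j)^2)"
    by (rule sum.mono_neutral_right) auto
  also have "\<dots> \<le> (\<Sum>i\<in>{i\<in>{..<n}. B i j \<noteq> 0}. a^2)"
  proof (rule sum_mono)
    fix i assume "i \<in> {i\<in>{..<n}. B i j \<noteq> 0}"
    then have "\<bar>B i j\<bar> \<le> a" using ent by auto
    then have "\<bar>B i j\<bar>^2 \<le> a^2" by (rule power_mono) simp
    then show "(B i j)^2 \<le> a^2" by simp
  qed
  also have "\<dots> = card {i\<in>{..<n}. B i j \<noteq> 0} * a^2" by simp
  also have "\<dots> \<le> D * a^2" using cols by (intro mult_right_mono) auto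
  finally show ?thesis .
qed

lemma schur_vec:
  fixes B :: "nat \<Rightarrow> nat \<Rightarrow> real" and D :: nat and a :: real
  assumes rows: "\<And>i. i<n \<Longrightarrow> card {j\<in>{..<n}. B i j \<noteq> 0} \<le> D"
  and cols: "\<And>j. j<n \<Longrightarrow> card {i\<in>{..<n}. B i j \<noteq> 0} \<le> D"
  and ent: "\<And>i j. i<n \<Longrightarrow> j<n \<Longrightarrow> \<bar>B i j\<bar> \<le> a"
  and a0: "0 \<le> a" and x: "vec_norm2 n x \<le> 1"
  shows "vec_norm2 n (\<lambda>i. \<Sum>j<n. B i j * x j) \<le> D * a"
proof -
  have A: "(\<Sum>j<n. (x j)^2 * (\<Sum>i<n. (B i j)^2)) \<le> (\<Sum>j<n. (x j)^2 * (D * a^2))"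
  proof (rule sum_mono)
    fix j assume "j \<in> {..<n}"
    then have "(\<Sum>i<n. (B i j)^2) \<le> D * a^2"
      using cols[of j] ent[of _ j] by (intro sv3) auto
    then show "(x j)^2 * (\<Sum>i<n. (B i j)^2) \<le> (x j)^2 * (D * a^2)"
      by (rule mult_left_mono) simp
  qed
  have B: "(\<Sum>j<n. (x j)^2 * (D * a^2)) = (D * a^2) * (\<Sum>j<n. (x j)^2)"
    by (subst sum_distrib_right[symmetric]) (rule mult.commute)
  have le: "(\<Sum>i<n. (\<Sum>j<n. B i j * x j)^2) \<le> (D * a)^2 * (\<Sum>j<n. (x j)^2)"
  proof -
    have "(\<Sum>i<n. (\<Sum>j<n. B i j * x j)^2) \<le> D * (\<Sum>j<n. (x j)^2 * (\<Sum>i<n. (B i j)^2))"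
      using sv1[OF rows] sv2 by simp
    also have "\<dots> \<le> D * ((D * a^2) * (\<Sum>j<n. (x j)^2))"
      using A B by (intro mult_left_mono) auto
    also have "\<dots> = (D * a)^2 * (\<Sum>j<n. (x j)^2)"
      by (simp add: power2_eq_square)
    finally show ?thesis .
  qed
  have sx: "(\<Sum>j<n. (x j)^2) \<le> 1" using x unfolding vec_norm2_def
    by (metis real_sqrt_le_1_iff)
  have "vec_norm2 n (\<lambda>i. \<Sum>j<n. B i j * x j) \<le> sqrt ((D * a)^2 * (\<Sum>j<n. (x j)^2))"
    unfolding vec_norm2_def by (rule real_sqrt_le_mono[OF le])
  also have "\<dots> \<le> sqrt ((D * a)^2 * 1)"
    using sx by (intro real_sqrt_le_mono mult_left_mono) auto
  also have "\<dots> = D * a" using a0 by simp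
  finally show ?thesis .
qed

lemma schur:
  fixes B :: "nat \<Rightarrow> nat \<Rightarrow> real" and D :: nat and a :: real
  assumes rows: "\<And>i. i<n \<Longrightarrow> card {j\<in>{..<n}. B i j \<noteq> 0} \<le> D"
  and cols: "\<And>j. j<n \<Longrightarrow> card {i\<in>{..<n}. B i j \<noteq> 0} \<le> D"
  and ent: "\<And>i j. i<n \<Longrightarrow> j<n \<Longrightarrow> \<bar>B i j\<bar> \<le> a"
  and a0: "0 \<le> a"
  shows "op_norm n B \<le> D * a"
proof -
  let ?S = "{vec_norm2 n (\<lambda>i. \<Sum>j<n. B i j * x j) |x. vec_norm2 n x \<le> 1}"
  have z: "vec_norm2 n (\<lambda>_. 0) \<le> 1" by (simp add: vec_norm2_def)
  have "vec_norm2 n (\<lambda>i. \<Sum>j<n. B i j * (\<lambda>_. 0) j) \<in> ?S"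
    apply (rule CollectI) apply (rule exI[where x="\<lambda>_. 0"]) using z by simp
  then have ne: "?S \<noteq> {}" by blast
  have ub: "\<forall>y\<in>?S. y \<le> D * a"
    using schur_vec[OF rows cols ent a0] by blast
  show ?thesis unfolding op_norm_def
    using ne ub by (intro cSup_least) auto
qed


definition nzc :: "(nat \<times> nat \<Rightarrow> real) \<Rightarrow> (nat \<times> nat) set \<Rightarrow> nat" where
  "nzc \<omega> L = card {q\<in>L. \<omega> q \<noteq> 0}"

definition hvr :: "nat \<Rightarrow> real \<Rightarrow> real" where
  "hvr K d = (if real K \<le> d then d else 0)"

definition gb :: "real \<Rightarrow> real" where
  "gb x = (if x \<noteq> 0 then 2 * exp 1 else 1)"

lemma nzc_sum: "finite L \<Longrightarrow> real (nzc \<omega> L) = (\<Sum>q\<in>L. if \<omega> q \<noteq> 0 then 1 else 0)"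
  unfolding nzc_def by (simp add: sum.inter_filter[symmetric])

lemma nzc_prod: "finite L \<Longrightarrow> (2 * exp 1) ^ (nzc \<omega> L) = (\<Prod>q\<in>L. gb (\<omega> q))"
  unfolding nzc_def gb_def by (simp add: prod.inter_filter[symmetric])

lemma meas_comp:
  assumes "sets \<mu> = sets borel" "q \<in> I"
  shows "(\<lambda>\<omega>. \<omega> q) \<in> borel_measurable (PiM I (\<lambda>_. \<mu>))"
proof -
  have "(\<lambda>\<omega>. \<omega> q) \<in> measurable (PiM I (\<lambda>_. \<mu>)) \<mu>"
    using assms(2) by (rule measurable_component_singleton)
  then show ?thesis
    using measurable_cong_sets[OF refl assms(1), of "PiM I (\<lambda>_. \<mu>)"] by simp
qed

lemma meas_nzc:
  assumes sb: "sets \<mu> = sets borel" and "L \<subseteq> I" "finite L"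
  shows "(\<lambda>\<omega>. real (nzc \<omega> L)) \<in> borel_measurable (PiM I (\<lambda>_. \<mu>))"
proof -
  have [measurable]: "(\<lambda>\<omega>. \<omega> q) \<in> borel_measurable (PiM I (\<lambda>_. \<mu>))" if "q \<in> L" for q
    using meas_comp[OF sb] that assms by auto
  have "(\<lambda>\<omega>. (\<Sum>q\<in>L. if \<omega> q \<noteq> 0 then 1 else 0::real)) \<in> borel_measurable (PiM I (\<lambda>_. \<mu>))"
  proof (rule borel_measurable_sum)
    fix q assume "q \<in> L"
    then have [measurable]: "(\<lambda>\<omega>. \<omega> q) \<in> borel_measurable (PiM I (\<lambda>_. \<mu>))" by fact
    show "(\<lambda>\<omega>. if \<omega> q \<noteq> 0 then 1 else 0::real) \<in> borel_measurable (PiM I (\<lambda>_. \<mu>))"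
      by measurable
  qed
  then show ?thesis using nzc_sum[OF assms(3)] by simp
qed

lemma meas_prod_gb:
  assumes sb: "sets \<mu> = sets borel" and "U \<subseteq> I"
  shows "(\<lambda>\<omega>. \<Prod>q\<in>U. gb (\<omega> q)) \<in> borel_measurable (PiM I (\<lambda>_. \<mu>))"
proof (rule borel_measurable_prod)
  fix q assume "q \<in> U"
  then have [measurable]: "(\<lambda>\<omega>. \<omega> q) \<in> borel_measurable (PiM I (\<lambda>_. \<mu>))"
    using meas_comp[OF sb] assms by auto
  show "(\<lambda>\<omega>. gb (\<omega> q)) \<in> borel_measurable (PiM I (\<lambda>_. \<mu>))"
    unfolding gb_def by measurable
qed

lemma exp_hvr:
  "exp (hvr K (real d)) \<le> 1 + (1/2)^K * (2 * exp 1) ^ d"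
proof (cases "K \<le> d")
  case True
  have "exp (real d) = exp 1 ^ d" using exp_of_nat_mult[of d 1] by simp
  also have "\<dots> = 1 * exp 1 ^ d" by simp
  also have "\<dots> \<le> ((1/2)^K * 2^d) * exp 1 ^ d"
  proof (rule mult_right_mono)
    have "(2::real)^K \<le> 2^d" using True by (rule power_increasing) simp
    then show "1 \<le> (1/2::real)^K * 2^d" by (simp add: power_one_over field_simps)
  qed simp
  also have "\<dots> = (1/2)^K * (2 * exp 1) ^ d" by (simp add: power_mult_distrib)
  also have "\<dots> \<le> 1 + (1/2)^K * (2 * exp 1) ^ d" by simp
  finally show ?thesis using True by (simp add: hvr_def)
next
  case False
  then show ?thesis by (simp add: hvr_def)
qed

lemma integral_gb:
  assumes P: "prob_space \<mu>" and sb: "sets \<mu> = sets borel"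
  shows "integrable \<mu> gb" "(\<integral>x. gb x \<partial>\<mu>) = 1 + (2 * exp 1 - 1) * measure \<mu> {x\<in>space \<mu>. x \<noteq> 0}"
proof -
  interpret prob_space \<mu> by fact
  have S: "{x\<in>space \<mu>. x \<noteq> 0} \<in> sets \<mu>" using sb by simp
  have eq: "gb = (\<lambda>x. 1 + (2 * exp 1 - 1) * indicator {x\<in>space \<mu>. x \<noteq> 0} x)"
    using sb by (auto simp: gb_def indicator_def fun_eq_iff sets_eq_imp_space_eq)
  show "integrable \<mu> gb" unfolding eq
    by (intro Bochner_Integration.integrable_add integrable_mult_right integrable_real_indicator integrable_const S) (auto simp: emeasure_eq_measure)
  show "(\<integral>x. gb x \<partial>\<mu>) = 1 + (2 * exp 1 - 1) * measure \<mu> {x\<in>space \<mu>. x \<noteq> 0}"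
    unfolding eq using S
    by (subst Bochner_Integration.integral_add) (auto intro!: integrable_real_indicator simp: prob_space emeasure_eq_measure)
qed



lemma lines_mgf:
  fixes \<mu> :: "real measure" and L :: "'k \<Rightarrow> (nat\<times>nat) set" and \<Lambda> :: "'k set"
  assumes P: "prob_space \<mu>" and sb: "sets \<mu> = sets borel" and fI: "finite I" and fL: "finite \<Lambda>"
    and sub: "\<And>k. k \<in> \<Lambda> \<Longrightarrow> L k \<subseteq> I" and dj: "\<And>k k'. k \<in> \<Lambda> \<Longrightarrow> k' \<in> \<Lambda> \<Longrightarrow> k \<noteq> k' \<Longrightarrow> L k \<inter> L k' = {}"
    and cd: "\<And>k. k \<in> \<Lambda> \<Longrightarrow> card (L k) = m"
  shows "integrable (PiM I (\<lambda>_. \<mu>)) (\<lambda>\<omega>. exp (\<Sum>k\<in>\<Lambda>. hvr K (nzc \<omega> (L k))))"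
    "(\<integral>\<omega>. exp (\<Sum>k\<in>\<Lambda>. hvr K (nzc \<omega> (L k))) \<partial>PiM I (\<lambda>_. \<mu>))
     \<le> (1 + (1/2)^K * (1 + (2*exp 1 - 1) * measure \<mu> {x\<in>space \<mu>. x \<noteq> 0})^m) ^ card \<Lambda>"
proof -
  define M where "M = PiM I (\<lambda>_. \<mu>)"
  define c :: real where "c = (1/2)^K"
  define \<rho> where "\<rho> = 1 + (2*exp 1 - 1) * measure \<mu> {x\<in>space \<mu>. x \<noteq> 0}"
  define U where "U R = (\<Union>k\<in>R. L k)" for R
  define F where "F \<omega> = (\<Sum>R\<in>Pow \<Lambda>. c ^ card R * (\<Prod>q\<in>U R. gb (\<omega> q)))" for \<omega>
  interpret prob_space \<mu> by fact
  interpret PS: product_sigma_finite "\<lambda>_. \<mu>"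
    unfolding product_sigma_finite_def by (simp add: prob_space_imp_sigma_finite P)
  interpret MP: prob_space M unfolding M_def by (rule prob_space_PiM) (rule P)
  have c0: "0 \<le> c" unfolding c_def by simp
  have finL: "finite (L k)" if "k \<in> \<Lambda>" for k using sub[OF that] fI by (rule finite_subset)
  have UI: "U R \<subseteq> I" if "R \<subseteq> \<Lambda>" for R using sub that unfolding U_def by blast
  have e1: "1 \<le> 2 * exp (1::real)" using exp_ge_add_one_self[of 1] by simp
  have gb1: "1 \<le> gb x" for x unfolding gb_def using exp_ge_add_one_self[of 1] by auto
  have pw: "exp (\<Sum>k\<in>\<Lambda>. hvr K (nzc \<omega> (L k))) \<le> F \<omega>" for \<omega>
  proof -
    have "exp (\<Sum>k\<in>\<Lambda>. hvr K (nzc \<omega> (L k))) = (\<Prod>k\<in>\<Lambda>. exp (hvr K (nzc \<omega> (L k))))"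
      using fL by (rule exp_sum)
    also have "\<dots> \<le> (\<Prod>k\<in>\<Lambda>. c * (\<Prod>q\<in>L k. gb (\<omega> q)) + 1)"
    proof (rule prod_mono)
      fix k assume k: "k \<in> \<Lambda>"
      show "0 \<le> exp (hvr K (nzc \<omega> (L k))) \<and> exp (hvr K (nzc \<omega> (L k))) \<le> c * (\<Prod>q\<in>L k. gb (\<omega> q)) + 1"
        using exp_hvr[of K "nzc \<omega> (L k)"] nzc_prod[OF finL[OF k], of \<omega>] unfolding c_def by simp
    qed
    also have "\<dots> = (\<Sum>R\<in>Pow \<Lambda>. (\<Prod>k\<in>R. c * (\<Prod>q\<in>L k. gb (\<omega> q))) * (\<Prod>k\<in>\<Lambda>-R. 1))"
      using fL by (rule prod_add)
    also have "\<dots> = F \<omega>" unfolding F_def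
    proof (intro sum.cong refl)
      fix R assume R: "R \<in> Pow \<Lambda>"
      then have fR: "finite R" using fL finite_subset by auto
      have "(\<Prod>k\<in>R. c * (\<Prod>q\<in>L k. gb (\<omega> q))) = c ^ card R * (\<Prod>k\<in>R. \<Prod>q\<in>L k. gb (\<omega> q))"
        by (simp add: prod.distrib)
      also have "(\<Prod>k\<in>R. \<Prod>q\<in>L k. gb (\<omega> q)) = (\<Prod>q\<in>U R. gb (\<omega> q))"
      proof -
        have djR: "\<forall>i\<in>R. \<forall>j\<in>R. i \<noteq> j \<longrightarrow> L i \<inter> L j = {}" using R dj by blast
        have fR': "\<forall>i\<in>R. finite (L i)" using R finL by blast
        show ?thesis unfolding U_def by (rule prod.UNION_disjoint[OF fR fR' djR, symmetric])
      qed
      finally show "(\<Prod>k\<in>R. c * (\<Prod>q\<in>L k. gb (\<omega> q))) * (\<Prod>k\<in>\<Lambda>-R. 1) = c ^ card R * (\<Prod>q\<in>U R. gb (\<omega> q))"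
        by simp
    qed
    finally show ?thesis .
  qed
  have intU: "integrable M (\<lambda>\<omega>. \<Prod>q\<in>U R. gb (\<omega> q)) \<and> (\<integral>\<omega>. (\<Prod>q\<in>U R. gb (\<omega> q)) \<partial>M) = \<rho> ^ card (U R)"
    if R: "R \<subseteq> \<Lambda>" for R
  proof -
    have UR: "U R \<subseteq> I" by (rule UI[OF R])
    have setEq: "{q\<in>I. q \<in> U R} = U R" using UR by blast
    have eq: "(\<Prod>q\<in>U R. gb (\<omega> q)) = (\<Prod>q\<in>I. (\<lambda>q x. if q \<in> U R then gb x else 1) q (\<omega> q))" for \<omega>
      using UR fI by (simp add: prod.inter_filter[symmetric] setEq)
    have ig: "integrable \<mu> (\<lambda>x. if q \<in> U R then gb x else 1)" for q
      using integral_gb(1)[OF P sb] by (cases "q \<in> U R") simp_all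
    have "(\<integral>\<omega>. (\<Prod>q\<in>U R. gb (\<omega> q)) \<partial>M) = (\<Prod>q\<in>I. \<integral>x. (if q \<in> U R then gb x else 1) \<partial>\<mu>)"
      unfolding eq M_def by (rule PS.product_integral_prod[OF fI ig])
    also have "\<dots> = (\<Prod>q\<in>I. if q \<in> U R then \<rho> else 1)"
      using integral_gb(2)[OF P sb] unfolding \<rho>_def by (intro prod.cong refl) (auto simp: prob_space)
    also have "\<dots> = \<rho> ^ card (U R)"
      using fI UR by (simp add: prod.inter_filter[symmetric] setEq)
    finally have I1: "(\<integral>\<omega>. (\<Prod>q\<in>U R. gb (\<omega> q)) \<partial>M) = \<rho> ^ card (U R)" .
    have "integrable M (\<lambda>\<omega>. \<Prod>q\<in>U R. gb (\<omega> q))"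
    proof (rule MP.integrable_const_bound[where B="(2 * exp 1) ^ card (U R)"])
      show "AE \<omega> in M. norm (\<Prod>q\<in>U R. gb (\<omega> q)) \<le> (2 * exp 1) ^ card (U R)"
      proof (rule AE_I2)
        fix \<omega>
        have "(\<Prod>q\<in>U R. gb (\<omega> q)) \<le> (\<Prod>q\<in>U R. 2 * exp 1)"
          by (rule prod_mono) (use gb1 e1 in \<open>auto simp: gb_def\<close>)
        moreover have "0 \<le> (\<Prod>q\<in>U R. gb (\<omega> q))" using gb1 by (intro prod_nonneg) (auto intro: order.trans[OF zero_le_one])
        ultimately show "norm (\<Prod>q\<in>U R. gb (\<omega> q)) \<le> (2 * exp 1) ^ card (U R)" by simp
      qed
      show "(\<lambda>\<omega>. \<Prod>q\<in>U R. gb (\<omega> q)) \<in> borel_measurable M"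
        unfolding M_def by (rule meas_prod_gb[OF sb UR])
    qed
    with I1 show ?thesis by blast
  qed
  have cardU: "card (U R) = card R * m" if R: "R \<subseteq> \<Lambda>" for R
  proof -
    have fR: "finite R" using fL R finite_subset by auto
    have "card (U R) = (\<Sum>k\<in>R. card (L k))"
    proof -
      have djR: "\<forall>i\<in>R. \<forall>j\<in>R. i \<noteq> j \<longrightarrow> L i \<inter> L j = {}" using R dj by blast
      have fR': "\<forall>i\<in>R. finite (L i)" using R finL by blast
      show ?thesis unfolding U_def by (rule card_UN_disjoint[OF fR fR' djR])
    qed
    also have "\<dots> = (\<Sum>k\<in>R. m)" using cd R by (intro sum.cong) auto
    also have "\<dots> = card R * m" by simp
    finally show ?thesis .
  qed
  have intF: "integrable M F" unfolding F_def
    using intU by (intro Bochner_Integration.integrable_sum integrable_mult_right) auto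
  have intF2: "(\<integral>\<omega>. F \<omega> \<partial>M) = (\<Sum>R\<in>Pow \<Lambda>. c ^ card R * \<rho> ^ (card R * m))"
    unfolding F_def using intU cardU
    by (subst Bochner_Integration.integral_sum) (auto intro!: sum.cong)
  also have "\<dots> = (\<Sum>R\<in>Pow \<Lambda>. (\<Prod>k\<in>R. c * \<rho> ^ m) * (\<Prod>k\<in>\<Lambda>-R. 1))"
    by (intro sum.cong refl) (simp add: power_mult power_mult_distrib mult.commute[of "card _" m])
  also have "\<dots> = (\<Prod>k\<in>\<Lambda>. c * \<rho> ^ m + 1)"
    using fL by (rule prod_add[symmetric])
  also have "\<dots> = (1 + c * \<rho> ^ m) ^ card \<Lambda>" by (simp add: add.commute)
  finally have intF3: "(\<integral>\<omega>. F \<omega> \<partial>M) = (1 + c * \<rho> ^ m) ^ card \<Lambda>" .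
  have mexp: "(\<lambda>\<omega>. exp (\<Sum>k\<in>\<Lambda>. hvr K (nzc \<omega> (L k)))) \<in> borel_measurable M"
  proof -
    have "(\<lambda>\<omega>. (\<Sum>k\<in>\<Lambda>. hvr K (nzc \<omega> (L k)))) \<in> borel_measurable M"
    proof (rule borel_measurable_sum)
      fix k assume k: "k \<in> \<Lambda>"
      have [measurable]: "(\<lambda>\<omega>. real (nzc \<omega> (L k))) \<in> borel_measurable M"
        unfolding M_def by (rule meas_nzc[OF sb sub[OF k] finL[OF k]])
      show "(\<lambda>\<omega>. hvr K (real (nzc \<omega> (L k)))) \<in> borel_measurable M"
        unfolding hvr_def by measurable
    qed
    then show ?thesis by measurable
  qed
  have intE: "integrable M (\<lambda>\<omega>. exp (\<Sum>k\<in>\<Lambda>. hvr K (nzc \<omega> (L k))))"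
  proof (rule Bochner_Integration.integrable_bound[OF intF mexp])
    show "AE \<omega> in M. norm (exp (\<Sum>k\<in>\<Lambda>. hvr K (nzc \<omega> (L k)))) \<le> norm (F \<omega>)"
      using pw by (intro AE_I2) (smt (verit) exp_gt_zero real_norm_def)
  qed
  then show "integrable (PiM I (\<lambda>_. \<mu>)) (\<lambda>\<omega>. exp (\<Sum>k\<in>\<Lambda>. hvr K (nzc \<omega> (L k))))"
    unfolding M_def .
  have "(\<integral>\<omega>. exp (\<Sum>k\<in>\<Lambda>. hvr K (nzc \<omega> (L k))) \<partial>M) \<le> (\<integral>\<omega>. F \<omega> \<partial>M)"
    using intE intF pw by (intro integral_mono) auto
  then show "(\<integral>\<omega>. exp (\<Sum>k\<in>\<Lambda>. hvr K (nzc \<omega> (L k))) \<partial>PiM I (\<lambda>_. \<mu>))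
     \<le> (1 + (1/2)^K * (1 + (2*exp 1 - 1) * measure \<mu> {x\<in>space \<mu>. x \<noteq> 0})^m) ^ card \<Lambda>"
    using intF3 unfolding M_def c_def \<rho>_def by simp
qed



lemma nzc_row: "nzc w ({i}\<times>{..<n}) = card {j\<in>{..<n}. w (i,j) \<noteq> 0}"
proof -
  have "{q\<in>{i}\<times>{..<n}. w q \<noteq> 0} = (\<lambda>j. (i,j)) ` {j\<in>{..<n}. w (i,j) \<noteq> 0}" by auto
  then show ?thesis unfolding nzc_def by (simp add: card_image inj_on_def)
qed

lemma nzc_col: "nzc w ({..<n}\<times>{j}) = card {i\<in>{..<n}. w (i,j) \<noteq> 0}"
proof -
  have "{q\<in>{..<n}\<times>{j}. w q \<noteq> 0} = (\<lambda>i. (i,j)) ` {i\<in>{..<n}. w (i,j) \<noteq> 0}" by auto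
  then show ?thesis unfolding nzc_def by (simp add: card_image inj_on_def)
qed

lemma hvr_sum: fixes n :: nat shows "(\<Sum>i<n. hvr K (real (f i))) = (\<Sum>i\<in>{i\<in>{..<n}. K \<le> f i}. real (f i))"
proof -
  have "(\<Sum>i<n. hvr K (real (f i))) = (\<Sum>i<n. if K \<le> f i then real (f i) else 0)"
    by (simp add: hvr_def)
  also have "\<dots> = (\<Sum>i\<in>{i\<in>{..<n}. K \<le> f i}. real (f i))"
    by (rule sum.inter_filter[symmetric]) simp
  finally show ?thesis .
qed

lemma card_le_sum:
  assumes "finite A" "\<And>i. i \<in> A \<Longrightarrow> 1 \<le> f i"
  shows "real (card A) \<le> (\<Sum>i\<in>A. real (f i))"
proof -
  have "real (card A) = (\<Sum>i\<in>A. 1)" by simp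
  also have "\<dots> \<le> (\<Sum>i\<in>A. real (f i))" using assms(2) by (intro sum_mono) auto
  finally show ?thesis .
qed

lemma det:
  fixes w :: "nat\<times>nat \<Rightarrow> real" and K :: nat and a e :: real
  assumes K1: "1 \<le> K" and good: "\<And>i j. i<n \<Longrightarrow> j<n \<Longrightarrow> \<bar>w (i,j)\<bar> \<le> a" and a0: "0 \<le> a"
    and S: "(\<Sum>i<n. hvr K (nzc w ({i}\<times>{..<n}))) + (\<Sum>j<n. hvr K (nzc w ({..<n}\<times>{j}))) \<le> e"
  shows "\<exists>I J. I \<subseteq> {..<n} \<and> J \<subseteq> {..<n} \<and> real (card I) \<le> e \<and> real (card J) \<le> e \<and>
           op_norm n (zero_block I J w) \<le> real (K-1) * a"
proof -
  define rd where "rd i = card {j\<in>{..<n}. w (i,j) \<noteq> 0}" for i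
  define cg where "cg j = card {i\<in>{..<n}. w (i,j) \<noteq> 0}" for j
  define Rh where "Rh = {i\<in>{..<n}. K \<le> rd i}"
  define Ch where "Ch = {j\<in>{..<n}. K \<le> cg j}"
  define I' where "I' = Rh \<union> (\<Union>j\<in>Ch. {i\<in>{..<n}. w (i,j) \<noteq> 0})"
  define J' where "J' = Ch \<union> (\<Union>i\<in>Rh. {j\<in>{..<n}. w (i,j) \<noteq> 0})"
  have Sr: "(\<Sum>i<n. hvr K (nzc w ({i}\<times>{..<n}))) = (\<Sum>i\<in>Rh. real (rd i))"
    unfolding nzc_row rd_def[symmetric] Rh_def by (rule hvr_sum)
  have Sc: "(\<Sum>j<n. hvr K (nzc w ({..<n}\<times>{j}))) = (\<Sum>j\<in>Ch. real (cg j))"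
    unfolding nzc_col cg_def[symmetric] Ch_def by (rule hvr_sum)
  have fR: "finite Rh" "finite Ch" unfolding Rh_def Ch_def by auto
  have cR: "real (card Rh) \<le> (\<Sum>i\<in>Rh. real (rd i))"
    using fR K1 by (intro card_le_sum) (auto simp: Rh_def)
  have cC: "real (card Ch) \<le> (\<Sum>j\<in>Ch. real (cg j))"
    using fR K1 by (intro card_le_sum) (auto simp: Ch_def)
  have u1: "real (card (\<Union>j\<in>Ch. {i\<in>{..<n}. w (i,j) \<noteq> 0})) \<le> (\<Sum>j\<in>Ch. real (cg j))"
  proof -
    have "card (\<Union>j\<in>Ch. {i\<in>{..<n}. w (i,j) \<noteq> 0}) \<le> (\<Sum>j\<in>Ch. card {i\<in>{..<n}. w (i,j) \<noteq> 0})"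
      by (rule card_UN_le[OF fR(2)])
    then show ?thesis unfolding cg_def by (simp only: of_nat_sum[symmetric] of_nat_le_iff)
  qed
  have u2: "real (card (\<Union>i\<in>Rh. {j\<in>{..<n}. w (i,j) \<noteq> 0})) \<le> (\<Sum>i\<in>Rh. real (rd i))"
  proof -
    have "card (\<Union>i\<in>Rh. {j\<in>{..<n}. w (i,j) \<noteq> 0}) \<le> (\<Sum>i\<in>Rh. card {j\<in>{..<n}. w (i,j) \<noteq> 0})"
      by (rule card_UN_le[OF fR(1)])
    then show ?thesis unfolding rd_def by (simp only: of_nat_sum[symmetric] of_nat_le_iff)
  qed
  have cI: "real (card I') \<le> e"
  proof -
    have "card I' \<le> card Rh + card (\<Union>j\<in>Ch. {i\<in>{..<n}. w (i,j) \<noteq> 0})"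
      unfolding I'_def by (rule card_Un_le)
    then have "real (card I') \<le> real (card Rh) + real (card (\<Union>j\<in>Ch. {i\<in>{..<n}. w (i,j) \<noteq> 0}))"
      by linarith
    then show ?thesis using cR u1 S Sr Sc by linarith
  qed
  have cJ: "real (card J') \<le> e"
  proof -
    have "card J' \<le> card Ch + card (\<Union>i\<in>Rh. {j\<in>{..<n}. w (i,j) \<noteq> 0})"
      unfolding J'_def by (rule card_Un_le)
    then have "real (card J') \<le> real (card Ch) + real (card (\<Union>i\<in>Rh. {j\<in>{..<n}. w (i,j) \<noteq> 0}))"
      by linarith
    then show ?thesis using cC u2 S Sr Sc by linarith
  qed
  define B where "B = zero_block I' J' w"
  have nz: "w (i,j) \<noteq> 0 \<and> i \<notin> Rh \<and> j \<notin> Ch" if "B i j \<noteq> 0" "i < n" "j < n" for i j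
  proof -
    have w: "w (i,j) \<noteq> 0" and nIJ: "\<not> (i \<in> I' \<and> j \<in> J')"
      using that(1) unfolding B_def zero_block_def by (auto split: if_splits)
    have "i \<notin> Rh"
    proof
      assume iR: "i \<in> Rh"
      then have "i \<in> I'" unfolding I'_def by blast
      moreover have "j \<in> J'" unfolding J'_def using iR w that(3) by blast
      ultimately show False using nIJ by blast
    qed
    moreover have "j \<notin> Ch"
    proof
      assume jC: "j \<in> Ch"
      then have "j \<in> J'" unfolding J'_def by blast
      moreover have "i \<in> I'" unfolding I'_def using jC w that(2) by blast
      ultimately show False using nIJ by blast
    qed
    ultimately show ?thesis using w by blast
  qed
  have rows: "card {j\<in>{..<n}. B i j \<noteq> 0} \<le> K - 1" if i: "i < n" for i
  proof (cases "\<exists>j<n. B i j \<noteq> 0")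
    case True
    then have "i \<notin> Rh" using nz i by blast
    then have "rd i < K" using i unfolding Rh_def by auto
    moreover have "card {j\<in>{..<n}. B i j \<noteq> 0} \<le> rd i"
      unfolding rd_def using nz i by (intro card_mono) auto
    ultimately show ?thesis by linarith
  next
    case False
    then have "{j\<in>{..<n}. B i j \<noteq> 0} = {}" by auto
    then show ?thesis by (metis card.empty le0)
  qed
  have cols: "card {i\<in>{..<n}. B i j \<noteq> 0} \<le> K - 1" if j: "j < n" for j
  proof (cases "\<exists>i<n. B i j \<noteq> 0")
    case True
    then have "j \<notin> Ch" using nz j by blast
    then have "cg j < K" using j unfolding Ch_def by auto
    moreover have "card {i\<in>{..<n}. B i j \<noteq> 0} \<le> cg j"
      unfolding cg_def using nz j by (intro card_mono) auto
    ultimately show ?thesis by linarith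
  next
    case False
    then have "{i\<in>{..<n}. B i j \<noteq> 0} = {}" by auto
    then show ?thesis by (metis card.empty le0)
  qed
  have ent: "\<bar>B i j\<bar> \<le> a" if "i < n" "j < n" for i j
    using good[OF that] a0 unfolding B_def zero_block_def by auto
  have on: "op_norm n (zero_block I' J' w) \<le> real (K-1) * a"
    using schur[OF rows cols ent a0] unfolding B_def .
  have sI: "I' \<subseteq> {..<n}" unfolding I'_def Rh_def by blast
  have sJ: "J' \<subseteq> {..<n}" unfolding J'_def Ch_def by blast
  show ?thesis
    apply (rule exI[of _ I'], rule exI[of _ J'])
    using sI sJ cI cJ on by simp
qed



lemma num_K:
  fixes \<epsilon> :: real
  assumes e0: "0 < \<epsilon>" and e1: "\<epsilon> \<le> 1/2"
  shows "(1/2::real) ^ nat \<lceil>log 2 (1/\<epsilon>)\<rceil> \<le> \<epsilon>"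
    "real (30 + nat \<lceil>log 2 (1/\<epsilon>)\<rceil>) \<le> 48 * ln (1/\<epsilon>)"
proof -
  define l where "l = log 2 (1/\<epsilon>)"
  have inv: "2 \<le> 1/\<epsilon>" using e0 e1 by (simp add: field_simps)
  have l0: "0 \<le> l" unfolding l_def using inv e0 e1 by (subst zero_le_log_cancel_iff) auto
  have cl0: "real (nat \<lceil>l\<rceil>) = of_int \<lceil>l\<rceil>" using l0 by (simp add: of_nat_nat)
  have cl: "l \<le> real (nat \<lceil>l\<rceil>)" unfolding cl0 by (rule le_of_int_ceiling)
  have "1/\<epsilon> = (2::real) powr l" unfolding l_def using e0 by simp
  also have "\<dots> \<le> 2 powr (real (nat \<lceil>l\<rceil>))"
    by (rule powr_mono) (use cl in \<open>simp_all\<close>)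
  also have "\<dots> = 2 ^ nat \<lceil>l\<rceil>" by (simp add: powr_realpow)
  finally have "1/\<epsilon> \<le> 2 ^ nat \<lceil>l\<rceil>" .
  then show "(1/2::real) ^ nat \<lceil>log 2 (1/\<epsilon>)\<rceil> \<le> \<epsilon>"
    unfolding l_def[symmetric] using e0 by (simp add: power_one_over field_simps)
  have L: "ln 2 \<le> ln (1/\<epsilon>)" using inv e0 by (subst ln_le_cancel_iff) auto
  have ln2: "2/3 \<le> ln (2::real)" by (rule ln2_ge_two_thirds)
  have lL: "l = ln (1/\<epsilon>) / ln 2" unfolding l_def log_def ..
  have "l \<le> 3/2 * ln (1/\<epsilon>)"
  proof -
    have "ln (1/\<epsilon>) / ln 2 \<le> ln (1/\<epsilon>) / (2/3)"
      using ln2 L by (intro divide_left_mono) auto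
    then show ?thesis unfolding lL by simp
  qed
  moreover have "real (nat \<lceil>l\<rceil>) \<le> l + 1" unfolding cl0 by (rule of_int_ceiling_le_add_one)
  ultimately show "real (30 + nat \<lceil>log 2 (1/\<epsilon>)\<rceil>) \<le> 48 * ln (1/\<epsilon>)"
    unfolding l_def[symmetric] using L ln2 by simp
qed

lemma num_rho:
  fixes \<epsilon> P :: real and n :: nat
  assumes e0: "0 < \<epsilon>" and e1: "\<epsilon> \<le> 1/2" and P0: "0 \<le> P" and nP: "real n * P \<le> 4"
  shows "(1/2::real) ^ (31 + nat \<lceil>log 2 (1/\<epsilon>)\<rceil>) * (1 + (2 * exp 1 - 1) * P) ^ n \<le> \<epsilon> / 4"
proof -
  define t where "t = (2 * exp 1 - 1) * P"
  have e272: "exp 1 < (272/100::real)" by (rule e_less_272)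
  have e1': "1 \<le> exp (1::real)" by simp
  have two_e: "1 \<le> 2 * exp (1::real)" using e1' by linarith
  have t0: "0 \<le> t" unfolding t_def using P0 e1' by (intro mult_nonneg_nonneg) linarith+
  have "(1 + t) ^ n \<le> exp t ^ n"
    using t0 by (intro power_mono) (auto simp: exp_ge_add_one_self add.commute)
  also have "\<dots> = exp (real n * t)" by (rule exp_of_nat_mult[symmetric])
  also have "\<dots> \<le> exp 18"
  proof -
    have "real n * t = (2 * exp 1 - 1) * (real n * P)" unfolding t_def by simp
    also have "\<dots> \<le> (2 * exp 1 - 1) * 4" using nP two_e by (intro mult_left_mono) auto
    also have "\<dots> \<le> 18" using e272 by simp
    finally show ?thesis by simp
  qed
  also have "\<dots> = exp 1 ^ 18" using exp_of_nat_mult[of 18 1] by simp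
  also have "\<dots> \<le> 3 ^ 18" using e272 by (intro power_mono) auto
  also have "\<dots> \<le> (2::real) ^ 29" by simp
  finally have A: "(1 + t) ^ n \<le> 2 ^ 29" .
  have B: "(1/2::real) ^ nat \<lceil>log 2 (1/\<epsilon>)\<rceil> \<le> \<epsilon>" by (rule num_K(1)[OF e0 e1])
  have "(1/2::real) ^ (31 + nat \<lceil>log 2 (1/\<epsilon>)\<rceil>) * (1 + t) ^ n
        = (1/2) ^ 31 * ((1/2) ^ nat \<lceil>log 2 (1/\<epsilon>)\<rceil> * (1 + t) ^ n)"
    by (simp add: power_add)
  also have "\<dots> \<le> (1/2) ^ 31 * (\<epsilon> * 2 ^ 29)"
    using A B t0 e0 by (intro mult_left_mono mult_mono) auto
  also have "\<dots> = \<epsilon> / 4" by (simp add: power_one_over)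
  finally show ?thesis unfolding t_def .
qed

lemma p_bound:
  fixes \<mu> :: "real measure" and n :: nat and b :: real
  assumes P: "prob_space \<mu>" and sb: "sets \<mu> = sets borel" and sq: "(\<integral>x. x^2 \<partial>\<mu>) \<le> 1"
    and ae: "AE x in \<mu>. x = 0 \<or> (sqrt (real n) / 2 \<le> \<bar>x\<bar> \<and> \<bar>x\<bar> \<le> b)"
  shows "real n * measure \<mu> {x\<in>space \<mu>. x \<noteq> 0} \<le> 4"
proof -
  interpret prob_space \<mu> by fact
  define A where "A = {x\<in>space \<mu>. x \<noteq> 0}"
  have As: "A \<in> sets \<mu>" unfolding A_def using sb by simp
  have mx: "(\<lambda>x. x^2) \<in> borel_measurable \<mu>"
    by (subst measurable_cong_sets[OF sb refl]) simp
  have int2: "integrable \<mu> (\<lambda>x. x^2)"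
  proof (rule integrable_const_bound[where B="b^2"])
    show "AE x in \<mu>. norm (x^2) \<le> b^2"
      using ae
    proof eventually_elim
      case (elim x)
      have "\<bar>x\<bar>^2 \<le> b^2" if "\<bar>x\<bar> \<le> b" using that by (intro power_mono) auto
      then show ?case using elim by auto
    qed
  qed (rule mx)
  have intA: "integrable \<mu> (\<lambda>x. real n / 4 * indicator A x)"
    using As by (intro integrable_mult_right integrable_real_indicator) (auto simp: emeasure_eq_measure)
  have "(\<integral>x. real n / 4 * indicator A x \<partial>\<mu>) \<le> (\<integral>x. x^2 \<partial>\<mu>)"
  proof (rule integral_mono_AE[OF intA int2])
    show "AE x in \<mu>. real n / 4 * indicator A x \<le> x^2"
      using ae
    proof eventually_elim
      case (elim x)
      show ?case
      proof (cases "x \<in> A")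
        case True
        then have "x \<noteq> 0" unfolding A_def by auto
        with elim have "sqrt (real n) / 2 \<le> \<bar>x\<bar>" by auto
        then have "(sqrt (real n) / 2)^2 \<le> \<bar>x\<bar>^2" by (rule power_mono) simp
        then show ?thesis using True by (simp add: power_divide)
      next
        case False
        then show ?thesis by simp
      qed
    qed
  qed
  then have "real n / 4 * measure \<mu> A \<le> 1" using sq As by simp
  then show ?thesis unfolding A_def[symmetric] by simp
qed



lemma meas_S:
  assumes sb: "sets \<mu> = sets borel" and fI: "finite I" and sub: "\<And>k. k\<in>\<Lambda> \<Longrightarrow> L k \<subseteq> I"
  shows "(\<lambda>\<omega>. \<Sum>k\<in>\<Lambda>. hvr K (nzc \<omega> (L k))) \<in> borel_measurable (PiM I (\<lambda>_. \<mu>))"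
proof (rule borel_measurable_sum)
  fix k assume k: "k \<in> \<Lambda>"
  have [measurable]: "(\<lambda>\<omega>. real (nzc \<omega> (L k))) \<in> borel_measurable (PiM I (\<lambda>_. \<mu>))"
    by (rule meas_nzc[OF sb sub[OF k] finite_subset[OF sub[OF k] fI]])
  show "(\<lambda>\<omega>. hvr K (real (nzc \<omega> (L k)))) \<in> borel_measurable (PiM I (\<lambda>_. \<mu>))"
    unfolding hvr_def by measurable
qed

lemma tail:
  fixes \<mu> :: "real measure" and L :: "'k \<Rightarrow> (nat\<times>nat) set" and \<Lambda> :: "'k set" and m :: nat
  assumes P: "prob_space \<mu>" and sb: "sets \<mu> = sets borel" and fI: "finite I" and fL: "finite \<Lambda>"
    and sub: "\<And>k. k \<in> \<Lambda> \<Longrightarrow> L k \<subseteq> I" and dj: "\<And>k k'. k \<in> \<Lambda> \<Longrightarrow> k' \<in> \<Lambda> \<Longrightarrow> k \<noteq> k' \<Longrightarrow> L k \<inter> L k' = {}"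
    and cd: "\<And>k. k \<in> \<Lambda> \<Longrightarrow> card (L k) = m" and cL: "card \<Lambda> = m"
    and rho: "(1/2)^K * (1 + (2*exp 1 - 1) * measure \<mu> {x\<in>space \<mu>. x \<noteq> 0})^m \<le> \<epsilon>/4"
    and e0: "0 \<le> \<epsilon>"
  shows "measure (PiM I (\<lambda>_. \<mu>)) {\<omega>\<in>space (PiM I (\<lambda>_. \<mu>)). \<epsilon> * real m / 2 \<le> (\<Sum>k\<in>\<Lambda>. hvr K (nzc \<omega> (L k)))}
         \<le> exp (- \<epsilon> * real m / 4)"
proof -
  define M where "M = PiM I (\<lambda>_. \<mu>)"
  define S where "S \<omega> = (\<Sum>k\<in>\<Lambda>. hvr K (nzc \<omega> (L k)))" for \<omega>
  define \<rho> where "\<rho> = 1 + (2*exp 1 - 1) * measure \<mu> {x\<in>space \<mu>. x \<noteq> 0}"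
  interpret MP: prob_space M unfolding M_def by (rule prob_space_PiM) (rule P)
  have int: "integrable M (\<lambda>\<omega>. exp (S \<omega>))"
    unfolding M_def S_def by (rule lines_mgf(1)[OF P sb fI fL sub dj cd])
  have bd: "(\<integral>\<omega>. exp (S \<omega>) \<partial>M) \<le> (1 + (1/2)^K * \<rho>^m) ^ m"
    using lines_mgf(2)[OF P sb fI fL sub dj cd, where K=K] unfolding M_def S_def \<rho>_def cL .
  have \<rho>0: "0 \<le> \<rho>"
  proof -
    have "1 \<le> 2 * exp (1::real)" using exp_ge_add_one_self[of 1] by linarith
    then show ?thesis unfolding \<rho>_def by (intro add_nonneg_nonneg mult_nonneg_nonneg) auto
  qed
  have "(1 + (1/2)^K * \<rho>^m) ^ m \<le> (1 + \<epsilon>/4) ^ m"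
    using rho \<rho>0 unfolding \<rho>_def[symmetric] by (intro power_mono) auto
  also have "\<dots> \<le> exp (\<epsilon>/4) ^ m"
    using e0 by (intro power_mono) (auto simp: exp_ge_add_one_self add.commute)
  also have "\<dots> = exp (real m * (\<epsilon>/4))" by (rule exp_of_nat_mult[symmetric])
  finally have bd2: "(\<integral>\<omega>. exp (S \<omega>) \<partial>M) \<le> exp (real m * (\<epsilon>/4))" using bd by linarith
  have seq: "{\<omega>\<in>space M. \<epsilon> * real m / 2 \<le> S \<omega>} = {\<omega>\<in>space M. exp (\<epsilon> * real m / 2) \<le> exp (S \<omega>)}"
    by simp
  have "measure M {\<omega>\<in>space M. exp (\<epsilon> * real m / 2) \<le> exp (S \<omega>)} \<le> (\<integral>\<omega>. exp (S \<omega>) \<partial>M) / exp (\<epsilon> * real m / 2)"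
    by (rule integral_Markov_inequality_measure[OF int, of "space M"]) auto
  also have "\<dots> \<le> exp (real m * (\<epsilon>/4)) / exp (\<epsilon> * real m / 2)"
    using bd2 by (intro divide_right_mono) auto
  also have "\<dots> = exp (- \<epsilon> * real m / 4)"
    by (simp add: exp_diff[symmetric] field_simps)
  finally have X: "measure M {\<omega>\<in>space M. exp (\<epsilon> * real m / 2) \<le> exp (S \<omega>)} \<le> exp (- \<epsilon> * real m / 4)" .
  have "measure M {\<omega>\<in>space M. \<epsilon> * real m / 2 \<le> S \<omega>} \<le> exp (- \<epsilon> * real m / 4)"
    unfolding seq by (rule X)
  then show ?thesis unfolding M_def S_def .
qed



theorem mainTheorem16:
  shows "\<exists>C::real. C > 0 \<and>
    (\<forall>(n::nat) (\<epsilon>::real) (\<mu>::real measure).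
      0 < \<epsilon> \<and> \<epsilon> \<le> 1/2 \<and> prob_space \<mu> \<and> sets \<mu> = sets borel \<and>
      (\<integral>x. x^2 \<partial>\<mu>) \<le> 1 \<and>
      (AE x in \<mu>. x = 0 \<or> (sqrt (real n) / 2 \<le> \<bar>x\<bar> \<and> \<bar>x\<bar> \<le> 5 * sqrt (real n) / sqrt \<epsilon>))
      \<longrightarrow>
      (\<exists>E \<in> sets (iid_matrix_space n \<mu>).
         measure (iid_matrix_space n \<mu>) E \<ge> 1 - 2 * exp (- \<epsilon> * real n / 4) \<and>
         (\<forall>w \<in> E. \<exists>I J. I \<subseteq> {..<n} \<and> J \<subseteq> {..<n} \<and>
             real (card I) \<le> \<epsilon> * real n \<and> real (card J) \<le> \<epsilon> * real n \<and>
             op_norm n (zero_block I J w) \<le> C * ln (1 / \<epsilon>) / sqrt \<epsilon> * sqrt (real n))))"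
proof (rule exI[of _ 240], intro conjI allI impI)
  show "(0::real) < 240" by simp
next
  fix n :: nat and \<epsilon> :: real and \<mu> :: "real measure"
  assume H: "0 < \<epsilon> \<and> \<epsilon> \<le> 1/2 \<and> prob_space \<mu> \<and> sets \<mu> = sets borel \<and>
      (\<integral>x. x^2 \<partial>\<mu>) \<le> 1 \<and>
      (AE x in \<mu>. x = 0 \<or> (sqrt (real n) / 2 \<le> \<bar>x\<bar> \<and> \<bar>x\<bar> \<le> 5 * sqrt (real n) / sqrt \<epsilon>))"
  then have e0: "0 < \<epsilon>" and e1: "\<epsilon> \<le> 1/2" and P: "prob_space \<mu>" and sb: "sets \<mu> = sets borel"
    and sq: "(\<integral>x. x^2 \<partial>\<mu>) \<le> 1"
    and ae: "AE x in \<mu>. x = 0 \<or> (sqrt (real n) / 2 \<le> \<bar>x\<bar> \<and> \<bar>x\<bar> \<le> 5 * sqrt (real n) / sqrt \<epsilon>)"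
    by auto
  define I where "I = {..<n} \<times> {..<n}"
  define M where "M = PiM I (\<lambda>_. \<mu>)"
  have Meq: "iid_matrix_space n \<mu> = M" unfolding M_def I_def iid_matrix_space_def ..
  define K where "K = 31 + nat \<lceil>log 2 (1/\<epsilon>)\<rceil>"
  define pr where "pr = measure \<mu> {x\<in>space \<mu>. x \<noteq> 0}"
  define a where "a = 5 * sqrt (real n) / sqrt \<epsilon>"
  have a0: "0 \<le> a" unfolding a_def using e0 by simp
  have np: "real n * pr \<le> 4" unfolding pr_def by (rule p_bound[OF P sb sq ae])
  have rho: "(1/2)^K * (1 + (2*exp 1 - 1) * pr)^n \<le> \<epsilon>/4"
    unfolding K_def by (rule num_rho[OF e0 e1 _ np]) (simp add: pr_def)
  define Sr where "Sr \<omega> = (\<Sum>i\<in>{..<n}. hvr K (nzc \<omega> ({i}\<times>{..<n})))" for \<omega>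
  define Sc where "Sc \<omega> = (\<Sum>j\<in>{..<n}. hvr K (nzc \<omega> ({..<n}\<times>{j})))" for \<omega>
  interpret MP: prob_space M unfolding M_def by (rule prob_space_PiM) (rule P)
  have fI: "finite I" unfolding I_def by simp
  have tR: "measure M {\<omega>\<in>space M. \<epsilon> * real n / 2 \<le> Sr \<omega>} \<le> exp (- \<epsilon> * real n / 4)"
    unfolding M_def Sr_def
    by (rule tail[OF P sb fI, of "{..<n}" "\<lambda>i. {i}\<times>{..<n}" n K \<epsilon>])
       (use rho e0 in \<open>auto simp: I_def pr_def card_cartesian_product\<close>)
  have tC: "measure M {\<omega>\<in>space M. \<epsilon> * real n / 2 \<le> Sc \<omega>} \<le> exp (- \<epsilon> * real n / 4)"
    unfolding M_def Sc_def
    by (rule tail[OF P sb fI, of "{..<n}" "\<lambda>j. {..<n}\<times>{j}" n K \<epsilon>])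
       (use rho e0 in \<open>auto simp: I_def pr_def card_cartesian_product\<close>)
  have mSr[measurable]: "Sr \<in> borel_measurable M" unfolding Sr_def M_def
    by (rule meas_S[OF sb fI]) (auto simp: I_def)
  have mSc[measurable]: "Sc \<in> borel_measurable M" unfolding Sc_def M_def
    by (rule meas_S[OF sb fI]) (auto simp: I_def)
  define good where "good x = (x = 0 \<or> (sqrt (real n) / 2 \<le> \<bar>x\<bar> \<and> \<bar>x\<bar> \<le> 5 * sqrt (real n) / sqrt \<epsilon>))" for x :: real
  define G where "G = {\<omega>\<in>space M. \<forall>q\<in>I. good (\<omega> q)}"
  have Gs: "G \<in> sets M"
  proof -
    have each: "{\<omega>\<in>space M. \<not> good (\<omega> q)} \<in> sets M" if "q \<in> I" for q
    proof -
      have [measurable]: "(\<lambda>\<omega>. \<omega> q) \<in> borel_measurable M" unfolding M_def using that by (rule meas_comp[OF sb])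
      show ?thesis unfolding good_def by measurable
    qed
    have "G = space M - (\<Union>q\<in>I. {\<omega>\<in>space M. \<not> good (\<omega> q)})" unfolding G_def by auto
    also have "\<dots> \<in> sets M" using each fI by (intro sets.Diff sets.top sets.finite_UN) auto
    finally show ?thesis .
  qed
  have aeg: "AE \<omega> in M. \<forall>q\<in>I. good (\<omega> q)"
  proof (rule AE_finite_allI[OF fI])
    fix q assume "q \<in> I"
    then show "AE \<omega> in M. good (\<omega> q)"
      unfolding M_def good_def using AE_PiM_component[of I "\<lambda>_. \<mu>" q] P ae by blast
  qed
  define Bad where "Bad = space M - G"
  have Bs: "Bad \<in> sets M" unfolding Bad_def using Gs by auto
  have "emeasure M Bad = 0"
    using aeg AE_iff_measurable[OF Bs, of "\<lambda>\<omega>. \<forall>q\<in>I. good (\<omega> q)"] unfolding Bad_def G_def by auto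
  then have mB: "measure M Bad = 0" by (simp add: measure_def)
  define A1 where "A1 = {\<omega>\<in>space M. \<epsilon> * real n / 2 \<le> Sr \<omega>}"
  define A2 where "A2 = {\<omega>\<in>space M. \<epsilon> * real n / 2 \<le> Sc \<omega>}"
  have A1s: "A1 \<in> sets M" unfolding A1_def by measurable
  have A2s: "A2 \<in> sets M" unfolding A2_def by measurable
  define E where "E = space M - (Bad \<union> A1 \<union> A2)"
  have Es: "E \<in> sets M" unfolding E_def using Bs A1s A2s by auto
  have "measure M (Bad \<union> A1 \<union> A2) \<le> measure M (Bad \<union> A1) + measure M A2"
    using Bs A1s A2s by (intro measure_subadditive) (auto simp: MP.emeasure_finite)
  also have "measure M (Bad \<union> A1) \<le> measure M Bad + measure M A1"
    using Bs A1s by (intro measure_subadditive) (auto simp: MP.emeasure_finite)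
  finally have "measure M (Bad \<union> A1 \<union> A2) \<le> 2 * exp (- \<epsilon> * real n / 4)"
    using mB tR tC unfolding A1_def A2_def by linarith
  moreover have "measure M E = 1 - measure M (Bad \<union> A1 \<union> A2)"
    unfolding E_def using Bs A1s A2s by (intro MP.prob_compl) auto
  ultimately have mE: "measure M E \<ge> 1 - 2 * exp (- \<epsilon> * real n / 4)" by linarith
  have det_part: "\<exists>I J. I \<subseteq> {..<n} \<and> J \<subseteq> {..<n} \<and>
             real (card I) \<le> \<epsilon> * real n \<and> real (card J) \<le> \<epsilon> * real n \<and>
             op_norm n (zero_block I J w) \<le> 240 * ln (1 / \<epsilon>) / sqrt \<epsilon> * sqrt (real n)"
    if w: "w \<in> E" for w
  proof -
    have wG: "\<forall>q\<in>I. good (w q)" and wR: "Sr w < \<epsilon> * real n / 2" and wC: "Sc w < \<epsilon> * real n / 2"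
      using w unfolding E_def Bad_def G_def A1_def A2_def by auto
    have gd: "\<bar>w (i,j)\<bar> \<le> a" if "i < n" "j < n" for i j
    proof -
      have "(i,j) \<in> I" unfolding I_def using that by simp
      then have "good (w (i,j))" using wG by blast
      then show ?thesis unfolding good_def a_def using a0 a_def by auto
    qed
    have S: "(\<Sum>i<n. hvr K (nzc w ({i}\<times>{..<n}))) + (\<Sum>j<n. hvr K (nzc w ({..<n}\<times>{j}))) \<le> \<epsilon> * real n"
      using wR wC unfolding Sr_def Sc_def by linarith
    have K1: "1 \<le> K" unfolding K_def by simp
    obtain I' J' where IJ: "I' \<subseteq> {..<n}" "J' \<subseteq> {..<n}" "real (card I') \<le> \<epsilon> * real n"
      "real (card J') \<le> \<epsilon> * real n" and on: "op_norm n (zero_block I' J' w) \<le> real (K-1) * a"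
      using det[OF K1 gd a0 S] by blast
    have "real (K-1) = real (30 + nat \<lceil>log 2 (1/\<epsilon>)\<rceil>)" unfolding K_def by simp
    also have "\<dots> \<le> 48 * ln (1/\<epsilon>)" by (rule num_K(2)[OF e0 e1])
    finally have "real (K-1) * a \<le> 48 * ln (1/\<epsilon>) * a" using a0 by (intro mult_right_mono) auto
    also have "\<dots> = 240 * ln (1 / \<epsilon>) / sqrt \<epsilon> * sqrt (real n)"
      unfolding a_def by simp
    finally have "op_norm n (zero_block I' J' w) \<le> 240 * ln (1 / \<epsilon>) / sqrt \<epsilon> * sqrt (real n)"
      using on by linarith
    then show ?thesis using IJ by blast
  qed
  show "\<exists>E \<in> sets (iid_matrix_space n \<mu>).
         measure (iid_matrix_space n \<mu>) E \<ge> 1 - 2 * exp (- \<epsilon> * real n / 4) \<and>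
         (\<forall>w \<in> E. \<exists>I J. I \<subseteq> {..<n} \<and> J \<subseteq> {..<n} \<and>
             real (card I) \<le> \<epsilon> * real n \<and> real (card J) \<le> \<epsilon> * real n \<and>
             op_norm n (zero_block I J w) \<le> 240 * ln (1 / \<epsilon>) / sqrt \<epsilon> * sqrt (real n))"
    unfolding Meq using Es mE det_part by blast
qed

end
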